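(* Let $(\Gamma,\lambda)$ be a tree plan. The complete $\mathcal{L}_\Gamma$-theory $\mathrm{Th}(\Gamma(\omega))$ is $\aleph_0$-categorical and has quantifier elimination.
   Context: Tree plans: a tree plan is a pair $(\Gamma,\lambda)$ where $\Gamma\subseteq\omega^{<\omega}$ is a finite set of finite sequences containing the empty sequence $\langle\rangle$ and closed under initial segments, and $\lambda:\Gamma\to\{1,\infty\}$ with $\lambda(\langle\rangle)=1$. $\Gamma(\omega)$ is the set of finite sequences $\langle(i_0,t_0),\dots,(i_n,t_n)\rangle$ (including the empty one) such that $\langle i_0,\dots,i_n\rangle\in\Gamma$ and for each $k\le n$: $t_k=\star$ (a fixed symbol not in $\omega$) if $\lambda(\langle i_0,\dots,i_k\rangle)=1$, and $t_k\in\omega$ if $\lambda(\langle i_0,\dots,i_k\rangle)=\infty$. It is a tree under the initial-segment order, viewed as a structure in the language $\mathcal{L}_t$ with $\le$, root constant $\varepsilon$ (the empty sequence), meet $\sqcap$ (longest common initial segment) and $\mathtt{pred}$ (delete the last entry; $\mathtt{pred}(\varepsilon)=\varepsilon$). The map $\pi:\Gamma(\omega)\to\Gamma$ sends $\langle(i_0,t_0),\dots,(i_n,t_n)\rangle$ to $\langle i_0,\dots,i_n\rangle$. The language $\mathcal{L}_\Gamma$ is $\mathcal{L}_t$ together with unary predicates $P_\sigma$ ($\sigma\in\Gamma$), interpreted by $P_\sigma=\pi^{-1}(\sigma)$. *)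

theory Defs
  imports Main "HOL-Library.Sublist" "HOL-Library.Countable_Set"
begin

datatype lab = One | Inf

definition tree_plan :: "nat list set \<Rightarrow> (nat list \<Rightarrow> lab) \<Rightarrow> bool" where
  "tree_plan \<Gamma> lam \<longleftrightarrow> finite \<Gamma> \<and> [] \<in> \<Gamma> \<and>
     (\<forall>s\<in>\<Gamma>. \<forall>k. take k s \<in> \<Gamma>) \<and> lam [] = One"

text \<open>Elements of Gamma(omega): lists of pairs (i_k, t_k); t_k = None encodes the
  symbol star, t_k = Some m encodes m in omega.\<close>

type_synonym elt = "(nat \<times> nat option) list"

definition treeplan_dom :: "nat list set \<Rightarrow> (nat list \<Rightarrow> lab) \<Rightarrow> elt set" where
  "treeplan_dom \<Gamma> lam = {s. map fst s \<in> \<Gamma> \<and>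
     (\<forall>k<length s. (lam (take (Suc k) (map fst s)) = One \<longleftrightarrow> snd (s ! k) = None))}"

datatype trm = Var nat | Eps | Meet trm trm | Pred trm

datatype fm = FF | Eq trm trm | Le trm trm | P "nat list" trm
  | Neg fm | Conj fm fm | Ex nat fm

fun tvars :: "trm \<Rightarrow> nat set" where
  "tvars (Var n) = {n}"
| "tvars Eps = {}"
| "tvars (Meet s t) = tvars s \<union> tvars t"
| "tvars (Pred t) = tvars t"

fun fv :: "fm \<Rightarrow> nat set" where
  "fv FF = {}"
| "fv (Eq s t) = tvars s \<union> tvars t"
| "fv (Le s t) = tvars s \<union> tvars t"
| "fv (P \<sigma> t) = tvars t"
| "fv (Neg \<phi>) = fv \<phi>"
| "fv (Conj \<phi> \<psi>) = fv \<phi> \<union> fv \<psi>"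
| "fv (Ex x \<phi>) = fv \<phi> - {x}"

fun wf_fm :: "nat list set \<Rightarrow> fm \<Rightarrow> bool" where
  "wf_fm \<Gamma> (P \<sigma> t) = (\<sigma> \<in> \<Gamma>)"
| "wf_fm \<Gamma> (Neg \<phi>) = wf_fm \<Gamma> \<phi>"
| "wf_fm \<Gamma> (Conj \<phi> \<psi>) = (wf_fm \<Gamma> \<phi> \<and> wf_fm \<Gamma> \<psi>)"
| "wf_fm \<Gamma> (Ex x \<phi>) = wf_fm \<Gamma> \<phi>"
| "wf_fm \<Gamma> _ = True"

fun qfree :: "fm \<Rightarrow> bool" where
  "qfree (Ex x \<phi>) = False"
| "qfree (Neg \<phi>) = qfree \<phi>"
| "qfree (Conj \<phi> \<psi>) = (qfree \<phi> \<and> qfree \<psi>)"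
| "qfree _ = True"

record 'a lstruct =
  univ :: "'a set"
  eps  :: 'a
  meet :: "'a \<Rightarrow> 'a \<Rightarrow> 'a"
  prd  :: "'a \<Rightarrow> 'a"
  leq  :: "'a \<Rightarrow> 'a \<Rightarrow> bool"
  pr   :: "nat list \<Rightarrow> 'a \<Rightarrow> bool"

definition is_struct :: "'a lstruct \<Rightarrow> bool" where
  "is_struct M \<longleftrightarrow> univ M \<noteq> {} \<and> eps M \<in> univ M \<and>
     (\<forall>x\<in>univ M. \<forall>y\<in>univ M. meet M x y \<in> univ M) \<and>
     (\<forall>x\<in>univ M. prd M x \<in> univ M)"

fun tval :: "'a lstruct \<Rightarrow> (nat \<Rightarrow> 'a) \<Rightarrow> trm \<Rightarrow> 'a" where
  "tval M e (Var n) = e n"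
| "tval M e Eps = eps M"
| "tval M e (Meet s t) = meet M (tval M e s) (tval M e t)"
| "tval M e (Pred t) = prd M (tval M e t)"

fun sat :: "'a lstruct \<Rightarrow> (nat \<Rightarrow> 'a) \<Rightarrow> fm \<Rightarrow> bool" where
  "sat M e FF = False"
| "sat M e (Eq s t) = (tval M e s = tval M e t)"
| "sat M e (Le s t) = leq M (tval M e s) (tval M e t)"
| "sat M e (P \<sigma> t) = pr M \<sigma> (tval M e t)"
| "sat M e (Neg \<phi>) = (\<not> sat M e \<phi>)"
| "sat M e (Conj \<phi> \<psi>) = (sat M e \<phi> \<and> sat M e \<psi>)"
| "sat M e (Ex x \<phi>) = (\<exists>a\<in>univ M. sat M (e(x := a)) \<phi>)"

definition assignment :: "'a lstruct \<Rightarrow> (nat \<Rightarrow> 'a) \<Rightarrow> bool" where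
  "assignment M e \<longleftrightarrow> (\<forall>n. e n \<in> univ M)"

definition treeplan_struct :: "nat list set \<Rightarrow> (nat list \<Rightarrow> lab) \<Rightarrow> elt lstruct" where
  "treeplan_struct \<Gamma> lam = \<lparr> univ = treeplan_dom \<Gamma> lam, eps = [],
      meet = longest_common_prefix, prd = butlast, leq = prefix,
      pr = (\<lambda>\<sigma> x. map fst x = \<sigma>) \<rparr>"

definition Th :: "nat list set \<Rightarrow> 'a lstruct \<Rightarrow> fm set" where
  "Th \<Gamma> M = {\<phi>. wf_fm \<Gamma> \<phi> \<and> fv \<phi> = {} \<and> (\<forall>e. assignment M e \<longrightarrow> sat M e \<phi>)}"

definition is_model :: "nat list set \<Rightarrow> fm set \<Rightarrow> 'a lstruct \<Rightarrow> bool" where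
  "is_model \<Gamma> T M \<longleftrightarrow> is_struct M \<and>
     (\<forall>\<phi>\<in>T. \<forall>e. assignment M e \<longrightarrow> sat M e \<phi>)"

definition L_iso :: "nat list set \<Rightarrow> 'a lstruct \<Rightarrow> 'b lstruct \<Rightarrow> ('a \<Rightarrow> 'b) \<Rightarrow> bool" where
  "L_iso \<Gamma> M N f \<longleftrightarrow> bij_betw f (univ M) (univ N) \<and> f (eps M) = eps N \<and>
     (\<forall>x\<in>univ M. \<forall>y\<in>univ M. f (meet M x y) = meet N (f x) (f y)) \<and>
     (\<forall>x\<in>univ M. f (prd M x) = prd N (f x)) \<and>
     (\<forall>x\<in>univ M. \<forall>y\<in>univ M. leq M x y \<longleftrightarrow> leq N (f x) (f y)) \<and>
     (\<forall>\<sigma>\<in>\<Gamma>. \<forall>x\<in>univ M. pr M \<sigma> x \<longleftrightarrow> pr N \<sigma> (f x))"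

text \<open>aleph_0-categoricity, with the model types given as parameters (type
  variables of the theorem are universally quantified).\<close>
definition aleph0_categorical ::
    "nat list set \<Rightarrow> fm set \<Rightarrow> 'a itself \<Rightarrow> 'b itself \<Rightarrow> bool" where
  "aleph0_categorical \<Gamma> T _ _ \<longleftrightarrow>
     (\<forall>(M::'a lstruct) (N::'b lstruct).
        is_model \<Gamma> T M \<and> countable (univ M) \<and> infinite (univ M) \<and>
        is_model \<Gamma> T N \<and> countable (univ N) \<and> infinite (univ N) \<longrightarrow>
        (\<exists>f. L_iso \<Gamma> M N f))"

text \<open>Quantifier elimination for T = Th(M) (M a model of the complete theory T):
  every L_Gamma formula is T-equivalent to a quantifier-free one in the same free
  variables; since T = Th(M), T proves the universal closure of phi <-> psi iff it holds in M.\<close>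
definition has_QE_Th :: "nat list set \<Rightarrow> 'a lstruct \<Rightarrow> bool" where
  "has_QE_Th \<Gamma> M \<longleftrightarrow>
     (\<forall>\<phi>. wf_fm \<Gamma> \<phi> \<longrightarrow> (\<exists>\<psi>. wf_fm \<Gamma> \<psi> \<and> qfree \<psi> \<and> fv \<psi> \<subseteq> fv \<phi> \<and>
        (\<forall>e. assignment M e \<longrightarrow> (sat M e \<phi> \<longleftrightarrow> sat M e \<psi>))))"

end

theory Submission
  imports Defs
begin


lemma tval_agree: "(\<forall>v\<in>tvars t. e v = e' v) \<Longrightarrow> tval M e t = tval M e' t"
  by (induction t) auto

lemma sat_agree: "(\<forall>v\<in>fv \<phi>. e v = e' v) \<Longrightarrow> sat M e \<phi> = sat M e' \<phi>"
proof (induction \<phi> arbitrary: e e')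
  case (Ex x \<phi>)
  have "\<And>a. sat M (e(x:=a)) \<phi> = sat M (e'(x:=a)) \<phi>"
    using Ex.prems by (intro Ex.IH) auto
  then show ?case by simp
next
  case (Eq s t) then have "tval M e s = tval M e' s" "tval M e t = tval M e' t" by (auto intro!: tval_agree)
  then show ?case by simp
next
  case (Le s t) then have "tval M e s = tval M e' s" "tval M e t = tval M e' t" by (auto intro!: tval_agree)
  then show ?case by simp
next
  case (P s t) then have "tval M e t = tval M e' t" by (auto intro!: tval_agree)
  then show ?case by simp
next
  case (Conj a b)
  then have "sat M e a = sat M e' a" "sat M e b = sat M e' b" by auto
  then show ?case by simp
qed auto

lemma finite_tvars: "finite (tvars t)" by (induction t) auto
lemma finite_fv: "finite (fv \<phi>)" by (induction \<phi>) (auto simp: finite_tvars)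

lemma fv_exs: "fv (foldr Ex vs \<psi>) = fv \<psi> - set vs"
  by (induction vs) auto
lemma wf_exs: "wf_fm \<Gamma> (foldr Ex vs \<psi>) = wf_fm \<Gamma> \<psi>"
  by (induction vs) auto

lemma sat_exs: "assignment M e \<Longrightarrow> sat M e (foldr Ex vs \<psi>) \<longleftrightarrow>
   (\<exists>e'. assignment M e' \<and> (\<forall>v. v \<notin> set vs \<longrightarrow> e' v = e v) \<and> sat M e' \<psi>)"
proof (induction vs arbitrary: e)
  case Nil
  then show ?case by (auto intro: sat_agree[THEN iffD1, rotated] simp: fun_eq_iff)
next
  case (Cons v vs)
  show ?case
  proof
    assume "sat M e (foldr Ex (v # vs) \<psi>)"
    then obtain a where a: "a \<in> univ M" "sat M (e(v:=a)) (foldr Ex vs \<psi>)" by auto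
    have "assignment M (e(v:=a))" using Cons.prems a unfolding assignment_def by auto
    with Cons.IH a obtain e' where "assignment M e'" "\<forall>u. u \<notin> set vs \<longrightarrow> e' u = (e(v:=a)) u" "sat M e' \<psi>"
      by blast
    then show "\<exists>e'. assignment M e' \<and> (\<forall>u. u \<notin> set (v#vs) \<longrightarrow> e' u = e u) \<and> sat M e' \<psi>"
      by (intro exI[of _ e']) auto
  next
    assume "\<exists>e'. assignment M e' \<and> (\<forall>u. u \<notin> set (v#vs) \<longrightarrow> e' u = e u) \<and> sat M e' \<psi>"
    then obtain e' where e': "assignment M e'" "\<forall>u. u \<notin> set (v#vs) \<longrightarrow> e' u = e u" "sat M e' \<psi>" by blast
    let ?a = "e' v"
    have a: "?a \<in> univ M" using e' unfolding assignment_def by auto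
    have "assignment M (e(v:=?a))" using Cons.prems a unfolding assignment_def by auto
    moreover have "\<forall>u. u \<notin> set vs \<longrightarrow> e' u = (e(v:=?a)) u" using e' by auto
    ultimately have "sat M (e(v:=?a)) (foldr Ex vs \<psi>)" using Cons.IH e' by blast
    then show "sat M e (foldr Ex (v # vs) \<psi>)" using a by auto
  qed
qed

lemma transfer:
  assumes M: "is_model \<Gamma> (Th \<Gamma> A) M" and wf: "wf_fm \<Gamma> \<chi>"
    and A: "\<forall>e. assignment A e \<longrightarrow> sat A e \<chi>" and e: "assignment M e"
  shows "sat M e \<chi>"
proof -
  obtain vs where vs: "set vs = fv \<chi>" using finite_fv finite_list by blast
  let ?s = "Neg (foldr Ex vs (Neg \<chi>))"
  have "?s \<in> Th \<Gamma> A"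
    unfolding Th_def using wf vs A by (auto simp: wf_exs fv_exs sat_exs)
  then have "sat M e ?s" using M e unfolding is_model_def by blast
  then show ?thesis using e by (auto simp: sat_exs)
qed




lemma prefix_iff_take: "prefix x y \<longleftrightarrow> x = take (length x) y"
  by (metis append_eq_conv_conj prefix_def take_is_prefix)

lemma butlast_pow: "(butlast ^^ k) x = take (length x - k) x"
  by (induction k) (auto simp: butlast_take)

lemma dom_take:
  assumes tp: "tree_plan \<Gamma> lam" and s: "s \<in> treeplan_dom \<Gamma> lam"
  shows "take k s \<in> treeplan_dom \<Gamma> lam"
proof -
  have "take k (map fst s) \<in> \<Gamma>" using tp s unfolding tree_plan_def treeplan_dom_def
    by blast
  then have "map fst (take k s) \<in> \<Gamma>" by (metis take_map)
  moreover have "\<forall>k'<length (take k s). (lam (take (Suc k') (map fst (take k s))) = One \<longleftrightarrow> snd (take k s ! k') = None)"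
    using s unfolding treeplan_dom_def by (auto simp: take_map min_def)
  ultimately show ?thesis unfolding treeplan_dom_def by blast
qed

lemma dom_Nil: "tree_plan \<Gamma> lam \<Longrightarrow> [] \<in> treeplan_dom \<Gamma> lam"
  unfolding tree_plan_def treeplan_dom_def by auto

lemma dom_len: "tree_plan \<Gamma> lam \<Longrightarrow> s \<in> treeplan_dom \<Gamma> lam \<Longrightarrow> length s \<le> Max (length ` \<Gamma>)"
proof -
  assume tp: "tree_plan \<Gamma> lam" and s: "s \<in> treeplan_dom \<Gamma> lam"
  have "map fst s \<in> \<Gamma>" "finite \<Gamma>" using tp s unfolding tree_plan_def treeplan_dom_def by auto
  then have "length (map fst s) \<le> Max (length ` \<Gamma>)" by (intro Max_ge) (auto intro: image_eqI[where x="map fst s"])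
  then show ?thesis by simp
qed

lemma dom_butlast: "tree_plan \<Gamma> lam \<Longrightarrow> s \<in> treeplan_dom \<Gamma> lam \<Longrightarrow> butlast s \<in> treeplan_dom \<Gamma> lam"
  by (simp add: butlast_conv_take dom_take)

lemma dom_bpow: "tree_plan \<Gamma> lam \<Longrightarrow> s \<in> treeplan_dom \<Gamma> lam \<Longrightarrow> (butlast^^k) s \<in> treeplan_dom \<Gamma> lam"
  by (simp add: butlast_pow dom_take)

lemma dom_lcp: "tree_plan \<Gamma> lam \<Longrightarrow> s \<in> treeplan_dom \<Gamma> lam \<Longrightarrow> longest_common_prefix s t \<in> treeplan_dom \<Gamma> lam"
  by (metis dom_take longest_common_prefix_prefix1 prefix_iff_take)

section \<open>Tree maps built from local permutations\<close>

definition gmap :: "(elt \<Rightarrow> nat \<Rightarrow> nat option \<Rightarrow> nat option) \<Rightarrow> elt \<Rightarrow> elt" where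
  "gmap \<rho> s = map (\<lambda>k. (fst (s!k), \<rho> (take k s) (fst (s!k)) (snd (s!k)))) [0..<length s]"

lemma length_gmap[simp]: "length (gmap \<rho> s) = length s"
  by (simp add: gmap_def)

lemma nth_gmap: "k < length s \<Longrightarrow> gmap \<rho> s ! k = (fst (s!k), \<rho> (take k s) (fst (s!k)) (snd (s!k)))"
  by (simp add: gmap_def)

lemma map_fst_gmap[simp]: "map fst (gmap \<rho> s) = map fst s"
  by (rule nth_equalityI) (auto simp: nth_gmap)

lemma take_gmap: "take k (gmap \<rho> s) = gmap \<rho> (take k s)"
proof (rule nth_equalityI)
  fix i assume "i < length (take k (gmap \<rho> s))"
  then have i: "i < k" "i < length s" by auto
  then show "take k (gmap \<rho> s) ! i = gmap \<rho> (take k s) ! i"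
    by (simp add: nth_gmap take_take min_def)
qed simp

lemma gmap_Nil[simp]: "gmap \<rho> [] = []"
  by (simp add: gmap_def)

lemma gmap_snoc: "gmap \<rho> (s @ [(i,t)]) = gmap \<rho> s @ [(i, \<rho> s i t)]"
  by (rule nth_equalityI) (auto simp: nth_gmap nth_append)

lemma gmap_inj:
  assumes "\<forall>p i. inj (\<rho> p i)"
  shows "inj (gmap \<rho>)"
proof -
  have "\<forall>s'. gmap \<rho> s = gmap \<rho> s' \<longrightarrow> s = s'" for s
  proof (induction s rule: rev_induct)
    case Nil then show ?case by (metis gmap_Nil length_0_conv length_gmap)
  next
    case (snoc a s0)
    show ?case
    proof (intro allI impI)
      fix s' assume eq: "gmap \<rho> (s0 @ [a]) = gmap \<rho> s'"
      obtain i t where a: "a = (i,t)" by fastforce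
      have "length s' = Suc (length s0)" using arg_cong[OF eq, of length] by simp
      then have "s' \<noteq> []" by auto
      then obtain s0' b where "s' = s0' @ [b]" using rev_exhaust by blast
      moreover obtain i' t' where "b = (i',t')" by fastforce
      ultimately have s': "s' = s0' @ [(i',t')]" by simp
      from eq have "gmap \<rho> s0 = gmap \<rho> s0'" "i = i'" "\<rho> s0 i t = \<rho> s0' i' t'"
        unfolding a s' gmap_snoc by auto
      then have "s0 = s0'" "i = i'" "t = t'" using snoc.IH assms by (auto dest: injD)
      then show "s0 @ [a] = s'" using a s' by simp
    qed
  qed
  then show ?thesis by (auto intro: injI)
qed

lemma gmap_surj:
  assumes "\<forall>p i. surj (\<rho> p i)"
  shows "surj (gmap \<rho>)"
proof -
  have "\<exists>x. gmap \<rho> x = y" for y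
  proof (induction y rule: rev_induct)
    case Nil then show ?case by (auto intro: exI[of _ "[]"])
  next
    case (snoc a y0)
    obtain x0 where x0: "gmap \<rho> x0 = y0" using snoc.IH by blast
    obtain i t where a: "a = (i,t)" by fastforce
    have "t \<in> range (\<rho> x0 i)" using assms by auto
    then obtain t0 where "\<rho> x0 i t0 = t" by auto
    then have "gmap \<rho> (x0 @ [(i,t0)]) = y0 @ [a]" using x0 a by (simp add: gmap_snoc)
    then show ?case by blast
  qed
  then show ?thesis unfolding surj_def by metis
qed

lemma gmap_dom:
  assumes "\<forall>p i t. \<rho> p i t = None \<longleftrightarrow> t = None"
  shows "gmap \<rho> x \<in> treeplan_dom \<Gamma> lam \<longleftrightarrow> x \<in> treeplan_dom \<Gamma> lam"
  unfolding treeplan_dom_def using assms by (simp add: nth_gmap)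

lemma gmap_prefix:
  assumes "inj (gmap \<rho>)"
  shows "prefix (gmap \<rho> x) (gmap \<rho> y) \<longleftrightarrow> prefix x y"
  unfolding prefix_iff_take by (simp add: take_gmap inj_eq[OF assms])

lemma gmap_butlast: "gmap \<rho> (butlast x) = butlast (gmap \<rho> x)"
  by (simp add: butlast_conv_take take_gmap)

lemma gmap_lcp:
  assumes inj: "inj (gmap \<rho>)"
  shows "gmap \<rho> (longest_common_prefix x y) = longest_common_prefix (gmap \<rho> x) (gmap \<rho> y)"
proof -
  let ?g = "gmap \<rho>"
  let ?l = "longest_common_prefix x y" and ?z = "longest_common_prefix (?g x) (?g y)"
  have "prefix ?l x" "prefix ?l y"
    by (rule longest_common_prefix_prefix1, rule longest_common_prefix_prefix2)
  then have "prefix (?g ?l) (?g x)" "prefix (?g ?l) (?g y)" using gmap_prefix[OF inj] by auto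
  then have a: "prefix (?g ?l) ?z" by (rule longest_common_prefix_max_prefix)
  have "prefix ?z (?g x)" by (rule longest_common_prefix_prefix1)
  then have zx: "?z = ?g (take (length ?z) x)" unfolding prefix_iff_take by (simp add: take_gmap)
  have "prefix ?z (?g y)" by (rule longest_common_prefix_prefix2)
  then have zy: "?z = ?g (take (length ?z) y)" unfolding prefix_iff_take by (simp add: take_gmap)
  have tt: "take (length ?z) x = take (length ?z) y" by (rule injD[OF inj]) (metis zx zy)
  have "prefix (take (length ?z) x) x" "prefix (take (length ?z) y) y" by (rule take_is_prefix)+
  then have "prefix (take (length ?z) x) ?l" using tt by (intro longest_common_prefix_max_prefix) auto
  then have "prefix (?g (take (length ?z) x)) (?g ?l)" using gmap_prefix[OF inj] by auto
  then have "prefix ?z (?g ?l)" using zx by simp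
  with a show ?thesis by (rule prefix_order.antisym)
qed




lemma perm_ext:
  fixes m :: "nat option \<Rightarrow> nat option"
  assumes fin: "finite F" and inj: "inj_on m F" and nn: "\<forall>t\<in>F. m t = None \<longleftrightarrow> t = None"
  shows "\<exists>r. bij r \<and> r None = None \<and> (\<forall>t\<in>F. r t = m t)"
proof -
  define F' where "F' = insert None F"
  define m' where "m' = m(None := None)"
  have inj': "inj_on m' F'"
    proof (rule inj_onI)
    fix x y assume "x \<in> F'" "y \<in> F'" "m' x = m' y"
    then show "x = y" unfolding F'_def m'_def using inj nn
      by (cases "x = None"; cases "y = None") (auto dest: inj_onD)
  qed
  have fin': "finite F'" using fin F'_def by simp
  have infU: "infinite (UNIV :: nat option set)"
  proof
    assume "finite (UNIV :: nat option set)"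
    then have "finite (range (Some :: nat \<Rightarrow> nat option))" by (rule finite_subset[rotated]) auto
    then have "finite (UNIV :: nat set)" by (rule finite_imageD) simp
    then show False by simp
  qed
  have C1: "infinite (UNIV - F')" using fin' infU by (rule Diff_infinite_finite)
  have C2: "infinite (UNIV - m' ` F')" using fin' infU by (intro Diff_infinite_finite) auto
  obtain g1 where g1: "bij_betw g1 (UNIV::nat set) (UNIV - F')"
    using countable_infiniteE'[OF countableI_type C1] by blast
  obtain g2 where g2: "bij_betw g2 (UNIV::nat set) (UNIV - m' ` F')"
    using countable_infiniteE'[OF countableI_type C2] by blast
  have q: "bij_betw (g2 \<circ> inv_into UNIV g1) (UNIV - F') (UNIV - m' ` F')"
    by (rule bij_betw_trans[OF bij_betw_inv_into[OF g1] g2])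
  define r where "r t = (if t \<in> F' then m' t else (g2 \<circ> inv_into UNIV g1) t)" for t
  have b1: "bij_betw r F' (m' ` F')"
    using inj' proof -
    have "bij_betw m' F' (m' ` F')" using inj' by (simp add: bij_betw_imageI)
    then show ?thesis using bij_betw_cong[of F' r m' "m' ` F'"] by (simp add: r_def)
  qed
  have b2: "bij_betw r (UNIV - F') (UNIV - m' ` F')"
  proof -
    have "\<And>t. t \<in> UNIV - F' \<Longrightarrow> r t = (g2 \<circ> inv_into UNIV g1) t" by (simp add: r_def)
    then show ?thesis using q bij_betw_cong[of "UNIV - F'" r "g2 \<circ> inv_into UNIV g1" "UNIV - m' ` F'"]
      by blast
  qed
  have "bij_betw r (F' \<union> (UNIV - F')) (m' ` F' \<union> (UNIV - m' ` F'))"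
    by (rule bij_betw_combine[OF b1 b2]) blast
  moreover have "F' \<union> (UNIV - F') = UNIV" "m' ` F' \<union> (UNIV - m' ` F') = UNIV" by blast+
  ultimately have "bij r" by simp
  moreover have "r None = None" unfolding r_def F'_def m'_def by simp
  moreover have "\<forall>t\<in>F. r t = m t"
  proof
    fix t assume tF: "t \<in> F"
    then have "r t = m' t" by (simp add: r_def F'_def)
    also have "m' t = m t"
    proof (cases "t = None")
      case True
      then have "m t = None" using nn[rule_format, OF tF] by simp
      then show ?thesis using True by (simp add: m'_def)
    next
      case False then show ?thesis unfolding m'_def by (metis fun_upd_other)
    qed
    finally show "r t = m t" .
  qed
  ultimately show ?thesis by blast
qed

lemma auto_exists:
  assumes tp: "tree_plan \<Gamma> lam"
  and Sfin: "finite S" and SD: "S \<subseteq> treeplan_dom \<Gamma> lam" and Sb: "\<forall>x\<in>S. butlast x \<in> S"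
  and finj: "inj_on f S" and fD: "\<forall>x\<in>S. f x \<in> treeplan_dom \<Gamma> lam"
  and ffst: "\<forall>x\<in>S. map fst (f x) = map fst x" and fb: "\<forall>x\<in>S. f (butlast x) = butlast (f x)"
  shows "\<exists>\<rho>. (\<forall>p i. bij (\<rho> p i) \<and> \<rho> p i None = None) \<and> (\<forall>x\<in>S. gmap \<rho> x = f x)"
proof -
  define m where "m p i t = snd (last (f (p @ [(i,t)])))" for p i t
  have fsnoc: "f (p @ [(i,t)]) = f p @ [(i, m p i t)]" if "p @ [(i,t)] \<in> S" for p i t
  proof -
    let ?x = "p @ [(i,t)]"
    have mf: "map fst (f ?x) = map fst ?x" using ffst that by blast
    then have "length (f ?x) = length ?x" by (metis length_map)
    then have ne: "f ?x \<noteq> []" by auto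
    have bl: "butlast (f ?x) = f p" using fb[rule_format, OF that] by simp
    have "fst (last (f ?x)) = last (map fst (f ?x))" using ne by (simp add: last_map)
    also have "\<dots> = i" using mf by simp
    finally have lst: "last (f ?x) = (i, m p i t)" unfolding m_def by (cases "last (f ?x)") auto
    have "f ?x = butlast (f ?x) @ [last (f ?x)]" using ne by simp
    also have "\<dots> = f p @ [(i, m p i t)]" using bl lst by simp
    finally show ?thesis .
  qed
  have ex: "\<exists>r. bij r \<and> r None = None \<and> (\<forall>t\<in>{t. p @ [(i,t)] \<in> S}. r t = m p i t)" for p i
  proof (rule perm_ext)
    have "inj (\<lambda>t. p @ [(i,t)])" by (auto simp: inj_on_def)
    then have "finite ((\<lambda>t. p @ [(i,t)]) -` S)" using Sfin by (intro finite_vimageI)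
    then show "finite {t. p @ [(i,t)] \<in> S}" by (simp add: vimage_def)
    show "inj_on (m p i) {t. p @ [(i,t)] \<in> S}"
    proof (rule inj_onI)
      fix t1 t2 assume a: "t1 \<in> {t. p @ [(i,t)] \<in> S}" "t2 \<in> {t. p @ [(i,t)] \<in> S}" "m p i t1 = m p i t2"
      then have "f (p@[(i,t1)]) = f (p@[(i,t2)])" using fsnoc by simp
      then have "p@[(i,t1)] = p@[(i,t2)]" by (rule inj_onD[OF finj]) (use a in simp_all)
      then show "t1 = t2" by simp
    qed
    show "\<forall>t\<in>{t. p @ [(i,t)] \<in> S}. m p i t = None \<longleftrightarrow> t = None"
    proof
      fix t assume tS: "t \<in> {t. p @ [(i,t)] \<in> S}"
      let ?x = "p@[(i,t)]"
      let ?k = "length p"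
      have xS: "?x \<in> S" using tS by simp
      have xD: "?x \<in> treeplan_dom \<Gamma> lam" using xS SD by auto
      have fxD: "f ?x \<in> treeplan_dom \<Gamma> lam" using xS fD by auto
      have fx: "f ?x = f p @ [(i, m p i t)]" using fsnoc xS by blast
      have pS: "p \<in> S" using Sb[rule_format, OF xS] by simp
      have len: "length (f p) = length p" using arg_cong[OF ffst[rule_format, OF pS], of length] by simp
      have mf: "map fst (f ?x) = map fst ?x" using ffst xS by blast
      have "(lam (take (Suc ?k) (map fst ?x)) = One) = (snd (?x ! ?k) = None)"
        using xD unfolding treeplan_dom_def by auto
      moreover have "(lam (take (Suc ?k) (map fst (f ?x))) = One) = (snd (f ?x ! ?k) = None)"
        using fxD len unfolding treeplan_dom_def fx by auto
      ultimately show "m p i t = None \<longleftrightarrow> t = None" using mf fx len by (simp add: nth_append)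
    qed
  qed
  define \<rho> where "\<rho> p i = (SOME r. bij r \<and> r None = None \<and> (\<forall>t\<in>{t. p @ [(i,t)] \<in> S}. r t = m p i t))" for p i
  have \<rho>: "bij (\<rho> p i) \<and> \<rho> p i None = None \<and> (\<forall>t\<in>{t. p @ [(i,t)] \<in> S}. \<rho> p i t = m p i t)" for p i
    unfolding \<rho>_def by (rule someI_ex[OF ex])
  have "x \<in> S \<longrightarrow> gmap \<rho> x = f x" for x
  proof (induction x rule: rev_induct)
    case Nil
    show ?case
    proof
      assume "[] \<in> S"
      then have "map fst (f []) = []" using ffst by auto
      then show "gmap \<rho> [] = f []" by simp
    qed
  next
    case (snoc a x0)
    obtain i t where a: "a = (i,t)" by fastforce
    show ?case
    proof
      assume xS: "x0 @ [a] \<in> S"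
      then have "x0 \<in> S" using Sb[rule_format, OF xS] by simp
      then have "gmap \<rho> x0 = f x0" using snoc.IH by blast
      then show "gmap \<rho> (x0 @ [a]) = f (x0 @ [a])"
        using xS \<rho>[of x0 i] fsnoc[of x0 i t] by (simp add: a gmap_snoc)
    qed
  qed
  then show ?thesis using \<rho> by blast
qed

lemma sat_auto:
  assumes tp: "tree_plan \<Gamma> lam" and \<rho>: "\<forall>p i. bij (\<rho> p i) \<and> \<rho> p i None = None"
  shows "sat (treeplan_struct \<Gamma> lam) (gmap \<rho> \<circ> e) \<phi> = sat (treeplan_struct \<Gamma> lam) e \<phi>"
proof -
  let ?g = "gmap \<rho>"
  have inj: "inj ?g" using \<rho> by (intro gmap_inj) (auto simp: bij_def)
  have surj: "surj ?g" using \<rho> by (intro gmap_surj) (auto simp: bij_def)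
  have nn: "\<forall>p i t. \<rho> p i t = None \<longleftrightarrow> t = None"
  proof (intro allI)
    fix p i t
    have "inj (\<rho> p i)" "\<rho> p i None = None" using \<rho> by (auto simp: bij_def)
    then show "\<rho> p i t = None \<longleftrightarrow> t = None" by (metis injD)
  qed
  have dom: "?g x \<in> treeplan_dom \<Gamma> lam \<longleftrightarrow> x \<in> treeplan_dom \<Gamma> lam" for x
    using gmap_dom[OF nn] .
  have tv: "tval (treeplan_struct \<Gamma> lam) (\<lambda>a. ?g (e a)) t = ?g (tval (treeplan_struct \<Gamma> lam) e t)" for e t
    by (induction t) (auto simp: treeplan_struct_def gmap_lcp[OF inj] gmap_butlast)
  show ?thesis
  proof (induction \<phi> arbitrary: e)
    case (Eq s t) then show ?case using tv[of e s] tv[of e t] by (simp add: inj_eq[OF inj] comp_def)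
  next
    case (Le s t) then show ?case using tv[of e s] tv[of e t] by (simp add: gmap_prefix[OF inj] treeplan_struct_def comp_def)
  next
    case (P \<sigma> t) then show ?case using tv[of e t] by (simp add: treeplan_struct_def comp_def)
  next
    case (Ex x \<phi>)
    have upd: "(?g \<circ> e)(x := ?g b) = ?g \<circ> (e(x := b))" for b by (simp add: fun_eq_iff)
    show ?case
    proof
      assume "sat (treeplan_struct \<Gamma> lam) (?g \<circ> e) (fm.Ex x \<phi>)"
      then obtain a where a: "a \<in> treeplan_dom \<Gamma> lam" "sat (treeplan_struct \<Gamma> lam) ((?g \<circ> e)(x := a)) \<phi>"
        by (auto simp: treeplan_struct_def)
      obtain b where b: "a = ?g b" using surj by (metis surjD)
      have "b \<in> treeplan_dom \<Gamma> lam" using a b dom by auto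
      moreover have "sat (treeplan_struct \<Gamma> lam) (?g \<circ> (e(x := b))) \<phi>" using a(2) unfolding b upd .
      then have "sat (treeplan_struct \<Gamma> lam) (e(x := b)) \<phi>" by (rule iffD1[OF Ex.IH])
      ultimately show "sat (treeplan_struct \<Gamma> lam) e (fm.Ex x \<phi>)" by (auto simp: treeplan_struct_def)
    next
      assume "sat (treeplan_struct \<Gamma> lam) e (fm.Ex x \<phi>)"
      then obtain b where b: "b \<in> treeplan_dom \<Gamma> lam" "sat (treeplan_struct \<Gamma> lam) (e(x := b)) \<phi>"
        by (auto simp: treeplan_struct_def)
      have "?g b \<in> treeplan_dom \<Gamma> lam" using b dom by auto
      moreover have "sat (treeplan_struct \<Gamma> lam) (?g \<circ> (e(x := b))) \<phi>" by (rule iffD2[OF Ex.IH b(2)])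
      then have "sat (treeplan_struct \<Gamma> lam) ((?g \<circ> e)(x := ?g b)) \<phi>" unfolding upd .
      ultimately show "sat (treeplan_struct \<Gamma> lam) (?g \<circ> e) (fm.Ex x \<phi>)" by (auto simp: treeplan_struct_def)
    qed
  qed auto
qed




definition pk :: "nat \<Rightarrow> nat \<Rightarrow> trm" where "pk v k = (Pred ^^ k) (Var v)"

definition Atoms :: "nat list set \<Rightarrow> nat set \<Rightarrow> fm set" where
  "Atoms \<Gamma> V = (\<lambda>(v,w,k,j). Eq (pk v k) (pk w j)) ` (V \<times> V \<times> {..Max (length ` \<Gamma>)} \<times> {..Max (length ` \<Gamma>)})
      \<union> (\<lambda>(\<sigma>,v,k). P \<sigma> (pk v k)) ` (\<Gamma> \<times> V \<times> {..Max (length ` \<Gamma>)})"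

lemma tvars_pk[simp]: "tvars (pk v k) = {v}" by (induction k) (auto simp: pk_def)

lemma tval_pk: "tval M e (pk v k) = (prd M ^^ k) (e v)"
  by (induction k) (auto simp: pk_def)

lemma Atoms_finite: "finite \<Gamma> \<Longrightarrow> finite V \<Longrightarrow> finite (Atoms \<Gamma> V)"
  by (simp add: Atoms_def)

lemma Atoms_props: "\<alpha> \<in> Atoms \<Gamma> V \<Longrightarrow> wf_fm \<Gamma> \<alpha> \<and> qfree \<alpha> \<and> fv \<alpha> \<subseteq> V"
  by (auto simp: Atoms_def)

lemma Atoms_Eq: "v \<in> V \<Longrightarrow> w \<in> V \<Longrightarrow> k \<le> Max (length ` \<Gamma>) \<Longrightarrow> j \<le> Max (length ` \<Gamma>) \<Longrightarrow>
   Eq (pk v k) (pk w j) \<in> Atoms \<Gamma> V"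
  unfolding Atoms_def by (rule UnI1, rule image_eqI[where x="(v,w,k,j)"]) auto

lemma Atoms_P: "\<sigma> \<in> \<Gamma> \<Longrightarrow> v \<in> V \<Longrightarrow> k \<le> Max (length ` \<Gamma>) \<Longrightarrow> P \<sigma> (pk v k) \<in> Atoms \<Gamma> V"
  unfolding Atoms_def by (rule UnI2, rule image_eqI[where x="(\<sigma>,v,k)"]) auto

lemma homog:
  assumes tp: "tree_plan \<Gamma> lam" and V: "finite V"
  and e: "assignment (treeplan_struct \<Gamma> lam) e" and e': "assignment (treeplan_struct \<Gamma> lam) e'"
  and agree: "\<forall>\<alpha>\<in>Atoms \<Gamma> V. sat (treeplan_struct \<Gamma> lam) e \<alpha> = sat (treeplan_struct \<Gamma> lam) e' \<alpha>"
  and fv\<phi>: "fv \<phi> \<subseteq> V"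
  shows "sat (treeplan_struct \<Gamma> lam) e \<phi> = sat (treeplan_struct \<Gamma> lam) e' \<phi>"
proof -
  define h where "h = Max (length ` \<Gamma>)"
  define A where "A = treeplan_struct \<Gamma> lam"
  define D where "D = treeplan_dom \<Gamma> lam"
  have eD: "e v \<in> D" "e' v \<in> D" for v
    using e e' by (auto simp: assignment_def D_def treeplan_struct_def)
  have key: "((butlast^^k) (e v) = (butlast^^j) (e w)) = ((butlast^^k) (e' v) = (butlast^^j) (e' w))"
    if "v\<in>V" "w\<in>V" "k \<le> h" "j \<le> h" for v w k j
  proof -
    have "Eq (pk v k) (pk w j) \<in> Atoms \<Gamma> V" using that unfolding h_def by (rule Atoms_Eq)
    then have "sat A e (Eq (pk v k) (pk w j)) = sat A e' (Eq (pk v k) (pk w j))"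
      using agree A_def by blast
    then show ?thesis by (simp add: tval_pk A_def treeplan_struct_def)
  qed
  have bD: "(butlast^^k) x \<in> D" if "x \<in> D" for x k
    using dom_bpow[OF tp] that D_def by blast
  have fsteq: "map fst ((butlast^^k)(e' v)) = map fst ((butlast^^k)(e v))" if "v\<in>V" "k\<le>h" for v k
  proof -
    let ?\<sigma> = "map fst ((butlast^^k)(e v))"
    have "(butlast^^k)(e v) \<in> D" using bD eD by blast
    then have "?\<sigma> \<in> \<Gamma>" unfolding D_def treeplan_dom_def by auto
    then have "P ?\<sigma> (pk v k) \<in> Atoms \<Gamma> V" using that unfolding h_def by (intro Atoms_P)
    then have "sat A e (P ?\<sigma> (pk v k)) = sat A e' (P ?\<sigma> (pk v k))" using agree A_def by blast
    then show ?thesis by (simp add: A_def tval_pk treeplan_struct_def)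
  qed
  have len_le: "length x \<le> h" if "x \<in> D" for x using dom_len[OF tp] that h_def D_def by auto
  have bh: "(butlast^^h) x = []" if "x\<in>D" for x using len_le[OF that] by (simp add: butlast_pow)
  define S where "S = (\<lambda>(v,k). (butlast^^k)(e v)) ` (V \<times> {..h})"
  define f where "f x = (SOME y. \<exists>v k. v\<in>V \<and> k \<le> h \<and> x = (butlast^^k)(e v) \<and> y = (butlast^^k)(e' v))" for x
  have fval: "f ((butlast^^k)(e v)) = (butlast^^k)(e' v)" if "v\<in>V" "k\<le>h" for v k
  proof -
    have "\<exists>y. \<exists>v' k'. v'\<in>V \<and> k' \<le> h \<and> (butlast^^k)(e v) = (butlast^^k')(e v') \<and> y = (butlast^^k')(e' v')"
      using that by blast
    from someI_ex[OF this] obtain v' k' where vk: "v'\<in>V" "k'\<le>h" "(butlast^^k)(e v) = (butlast^^k')(e v')"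
        "f ((butlast^^k)(e v)) = (butlast^^k')(e' v')" unfolding f_def by blast
    have "(butlast^^k)(e' v) = (butlast^^k')(e' v')" using key[OF that(1) vk(1) that(2) vk(2)] vk(3) by simp
    then show ?thesis using vk(4) by simp
  qed
  have memS: "x \<in> S \<longleftrightarrow> (\<exists>v k. v\<in>V \<and> k \<le> h \<and> x = (butlast^^k)(e v))" for x
    unfolding S_def by auto
  have Sfin: "finite S" using V unfolding S_def by auto
  have SD: "S \<subseteq> treeplan_dom \<Gamma> lam" using bD eD by (auto simp: memS D_def)
  have Sb: "\<forall>x\<in>S. butlast x \<in> S"
  proof
    fix x assume xS: "x \<in> S"
    then obtain v k where vk: "v\<in>V" "k\<le>h" "x = (butlast^^k)(e v)" by (auto simp: memS)
    show "butlast x \<in> S"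
    proof (cases "k < h")
      case True
      then have "butlast x = (butlast^^(Suc k))(e v)" using vk by simp
      then show ?thesis using True vk unfolding memS by (intro exI[of _ v] exI[of _ "Suc k"]) simp
    next
      case False
      then have "k = h" using vk by simp
      then have "x = []" using vk bh eD by simp
      then show ?thesis using xS by simp
    qed
  qed
  have finj: "inj_on f S"
  proof (rule inj_onI)
    fix x y assume xy: "x\<in>S" "y\<in>S" "f x = f y"
    then obtain v k w j where vk: "v\<in>V" "k\<le>h" "x = (butlast^^k)(e v)"
      and wj: "w\<in>V" "j\<le>h" "y = (butlast^^j)(e w)" by (auto simp: memS)
    have "(butlast^^k)(e' v) = (butlast^^j)(e' w)" using xy(3) fval vk wj by simp
    then show "x = y" using key[OF vk(1) wj(1) vk(2) wj(2)] vk wj by simp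
  qed
  have fD: "\<forall>x\<in>S. f x \<in> treeplan_dom \<Gamma> lam"
    using fval bD eD by (auto simp: memS D_def)
  have ffst: "\<forall>x\<in>S. map fst (f x) = map fst x"
    using fval fsteq by (auto simp: memS)
  have fb: "\<forall>x\<in>S. f (butlast x) = butlast (f x)"
  proof
    fix x assume xS: "x \<in> S"
    then obtain v k where vk: "v\<in>V" "k\<le>h" "x = (butlast^^k)(e v)" by (auto simp: memS)
    show "f (butlast x) = butlast (f x)"
    proof (cases "k < h")
      case True
      then have "butlast x = (butlast^^(Suc k))(e v)" using vk by simp
      then have "f (butlast x) = (butlast^^(Suc k))(e' v)" using fval[of v "Suc k"] vk True by simp
      then show ?thesis using fval vk by simp
    next
      case False
      then have "k = h" using vk by simp
      then have x0: "x = []" using vk bh eD by simp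
      have "f x = (butlast^^h)(e' v)" using fval[OF vk(1), of h] vk(3) \<open>k = h\<close> by simp
      also have "\<dots> = []" using bh eD by simp
      finally show ?thesis using x0 by simp
    qed
  qed
  obtain \<rho> where \<rho>: "\<forall>p i. bij (\<rho> p i) \<and> \<rho> p i None = None" "\<forall>x\<in>S. gmap \<rho> x = f x"
    using auto_exists[OF tp Sfin SD Sb finj fD ffst fb] by blast
  have ge: "gmap \<rho> (e v) = e' v" if "v \<in> V" for v
  proof -
    have "e v \<in> S" using that unfolding memS by (intro exI[of _ v] exI[of _ 0]) simp
    then show ?thesis using \<rho>(2) fval[OF that, of 0] by simp
  qed
  have "sat A e' \<phi> = sat A (gmap \<rho> \<circ> e) \<phi>" using fv\<phi> ge by (intro sat_agree) auto
  also have "\<dots> = sat A e \<phi>" unfolding A_def by (rule sat_auto[OF tp \<rho>(1)])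
  finally show ?thesis unfolding A_def by simp
qed

definition bigconj :: "fm list \<Rightarrow> fm" where "bigconj xs = foldr Conj xs (Neg FF)"
definition bigdisj :: "fm list \<Rightarrow> fm" where "bigdisj xs = foldr (\<lambda>a b. Neg (Conj (Neg a) (Neg b))) xs FF"

lemma sat_bigconj: "sat M e (bigconj xs) \<longleftrightarrow> (\<forall>x\<in>set xs. sat M e x)"
  by (induction xs) (auto simp: bigconj_def)
lemma sat_bigdisj: "sat M e (bigdisj xs) \<longleftrightarrow> (\<exists>x\<in>set xs. sat M e x)"
  by (induction xs) (auto simp: bigdisj_def)
lemma wf_bigconj: "wf_fm \<Gamma> (bigconj xs) \<longleftrightarrow> (\<forall>x\<in>set xs. wf_fm \<Gamma> x)"
  by (induction xs) (auto simp: bigconj_def)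
lemma wf_bigdisj: "wf_fm \<Gamma> (bigdisj xs) \<longleftrightarrow> (\<forall>x\<in>set xs. wf_fm \<Gamma> x)"
  by (induction xs) (auto simp: bigdisj_def)
lemma qfree_bigconj: "qfree (bigconj xs) \<longleftrightarrow> (\<forall>x\<in>set xs. qfree x)"
  by (induction xs) (auto simp: bigconj_def)
lemma qfree_bigdisj: "qfree (bigdisj xs) \<longleftrightarrow> (\<forall>x\<in>set xs. qfree x)"
  by (induction xs) (auto simp: bigdisj_def)
lemma fv_bigconj: "fv (bigconj xs) = (\<Union>x\<in>set xs. fv x)"
  by (induction xs) (auto simp: bigconj_def)
lemma fv_bigdisj: "fv (bigdisj xs) = (\<Union>x\<in>set xs. fv x)"
  by (induction xs) (auto simp: bigdisj_def)

definition chi :: "fm list \<Rightarrow> fm set \<Rightarrow> fm" where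
  "chi L B = bigconj (map (\<lambda>\<alpha>. if \<alpha> \<in> B then \<alpha> else Neg \<alpha>) L)"

lemma ball_map: "(\<forall>x\<in>set (map g L). Q x) = (\<forall>a\<in>set L. Q (g a))" by auto

lemma sat_chi: "sat M e (chi L B) \<longleftrightarrow> (\<forall>\<alpha>\<in>set L. sat M e \<alpha> \<longleftrightarrow> \<alpha> \<in> B)"
proof -
  have "sat M e (if \<alpha> \<in> B then \<alpha> else Neg \<alpha>) \<longleftrightarrow> (sat M e \<alpha> \<longleftrightarrow> \<alpha> \<in> B)" for \<alpha> by simp
  then show ?thesis unfolding chi_def sat_bigconj ball_map by (simp only:)
qed
lemma wf_chi: "\<forall>\<alpha>\<in>set L. wf_fm \<Gamma> \<alpha> \<Longrightarrow> wf_fm \<Gamma> (chi L B)"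
  by (auto simp: chi_def wf_bigconj)
lemma qfree_chi: "\<forall>\<alpha>\<in>set L. qfree \<alpha> \<Longrightarrow> qfree (chi L B)"
  by (auto simp: chi_def qfree_bigconj)
lemma fv_chi: "fv (chi L B) = (\<Union>x\<in>set L. fv x)"
  by (auto simp: chi_def fv_bigconj split: if_splits)

lemma QE:
  assumes tp: "tree_plan \<Gamma> lam"
  shows "has_QE_Th \<Gamma> (treeplan_struct \<Gamma> lam)"
  unfolding has_QE_Th_def
proof (intro allI impI)
  fix \<phi> assume wf: "wf_fm \<Gamma> \<phi>"
  define A where "A = treeplan_struct \<Gamma> lam"
  define V where "V = fv \<phi>"
  have finG: "finite \<Gamma>" using tp unfolding tree_plan_def by simp
  have finAt: "finite (Atoms \<Gamma> V)" using Atoms_finite[OF finG] finite_fv V_def by blast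
  obtain L where L: "set L = Atoms \<Gamma> V" using finite_list[OF finAt] by blast
  define Bs where "Bs = {B. B \<subseteq> Atoms \<Gamma> V \<and> (\<exists>e. assignment A e \<and> sat A e \<phi> \<and> B = {\<alpha>\<in>Atoms \<Gamma> V. sat A e \<alpha>})}"
  have "finite Bs" using finAt unfolding Bs_def by (rule finite_subset[rotated, OF finite_Pow_iff[THEN iffD2]]) auto
  then obtain Ls where Ls: "set Ls = chi L ` Bs" using finite_list finite_imageI by metis
  define \<psi> where "\<psi> = bigdisj Ls"
  have Lp: "\<forall>\<alpha>\<in>set L. wf_fm \<Gamma> \<alpha> \<and> qfree \<alpha> \<and> fv \<alpha> \<subseteq> V" using L Atoms_props by blast
  show "\<exists>\<psi>. wf_fm \<Gamma> \<psi> \<and> qfree \<psi> \<and> fv \<psi> \<subseteq> fv \<phi> \<and>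
        (\<forall>e. assignment (treeplan_struct \<Gamma> lam) e \<longrightarrow> sat (treeplan_struct \<Gamma> lam) e \<phi> = sat (treeplan_struct \<Gamma> lam) e \<psi>)"
  proof (intro exI[of _ \<psi>] conjI allI impI)
    show "wf_fm \<Gamma> \<psi>" unfolding \<psi>_def wf_bigdisj Ls using Lp wf_chi by blast
    show "qfree \<psi>" unfolding \<psi>_def qfree_bigdisj Ls using Lp qfree_chi by blast
    show "fv \<psi> \<subseteq> fv \<phi>" unfolding \<psi>_def fv_bigdisj Ls using Lp by (auto simp: fv_chi V_def)
    fix e assume e: "assignment (treeplan_struct \<Gamma> lam) e"
    show "sat (treeplan_struct \<Gamma> lam) e \<phi> = sat (treeplan_struct \<Gamma> lam) e \<psi>"
    proof
      assume s: "sat (treeplan_struct \<Gamma> lam) e \<phi>"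
      define B where "B = {\<alpha>\<in>Atoms \<Gamma> V. sat A e \<alpha>}"
      have "B \<in> Bs" unfolding Bs_def B_def using e s A_def by blast
      moreover have "sat A e (chi L B)" unfolding sat_chi L B_def by blast
      ultimately show "sat (treeplan_struct \<Gamma> lam) e \<psi>" unfolding \<psi>_def sat_bigdisj Ls A_def by blast
    next
      assume "sat (treeplan_struct \<Gamma> lam) e \<psi>"
      then obtain B where B: "B \<in> Bs" "sat A e (chi L B)" unfolding \<psi>_def sat_bigdisj Ls A_def by blast
      then obtain e' where e': "assignment A e'" "sat A e' \<phi>" "B = {\<alpha>\<in>Atoms \<Gamma> V. sat A e' \<alpha>}"
        unfolding Bs_def by blast
      have "\<forall>\<alpha>\<in>Atoms \<Gamma> V. sat A e \<alpha> = sat A e' \<alpha>" using B(2) e'(3) unfolding sat_chi L by blast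
      then have "sat A e \<phi> = sat A e' \<phi>"
        using homog[OF tp _ e e'(1)[unfolded A_def]] finite_fv V_def A_def by blast
      then show "sat (treeplan_struct \<Gamma> lam) e \<phi>" using e'(2) A_def by simp
    qed
  qed
qed




lemma realize:
  assumes M: "is_model \<Gamma> (Th \<Gamma> A) M" and wf: "wf_fm \<Gamma> \<theta>" and e: "assignment M e" and s: "sat M e \<theta>"
  shows "\<exists>e0. assignment A e0 \<and> sat A e0 \<theta>"
proof (rule ccontr)
  assume "\<not> ?thesis"
  then have H: "\<forall>e0. assignment A e0 \<longrightarrow> sat A e0 (Neg \<theta>)" by simp
  have "sat M e (Neg \<theta>)" by (rule transfer[OF M _ H e]) (simp add: wf)
  then show False using s by simp
qed

lemma complete_chi:
  assumes tp: "tree_plan \<Gamma> lam" and M: "is_model \<Gamma> (Th \<Gamma> (treeplan_struct \<Gamma> lam)) M"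
  and V: "finite V" and L: "set L = Atoms \<Gamma> V"
  and wf: "wf_fm \<Gamma> \<phi>" and fv\<phi>: "fv \<phi> \<subseteq> V"
  and e0: "assignment (treeplan_struct \<Gamma> lam) e0" "sat (treeplan_struct \<Gamma> lam) e0 (chi L B)"
  and e: "assignment M e" "sat M e (chi L B)"
  shows "sat M e \<phi> = sat (treeplan_struct \<Gamma> lam) e0 \<phi>"
proof -
  let ?A = "treeplan_struct \<Gamma> lam"
  have wfc: "wf_fm \<Gamma> (chi L B)" using L Atoms_props wf_chi by blast
  have eqv: "sat ?A e1 \<phi> = sat ?A e0 \<phi>" if "assignment ?A e1" "sat ?A e1 (chi L B)" for e1
  proof -
    have "\<forall>\<alpha>\<in>Atoms \<Gamma> V. sat ?A e1 \<alpha> = sat ?A e0 \<alpha>"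
      using that(2) e0(2) unfolding sat_chi L by blast
    then show ?thesis using homog[OF tp V that(1) e0(1) _ fv\<phi>] by blast
  qed
  show ?thesis
  proof (cases "sat ?A e0 \<phi>")
    case True
    have H: "\<forall>e1. assignment ?A e1 \<longrightarrow> sat ?A e1 (Neg (Conj (chi L B) (Neg \<phi>)))"
      using eqv True by auto
    have "sat M e (Neg (Conj (chi L B) (Neg \<phi>)))" by (rule transfer[OF M _ H e(1)]) (simp add: wf wfc)
    then show ?thesis using e(2) True by simp
  next
    case False
    have H: "\<forall>e1. assignment ?A e1 \<longrightarrow> sat ?A e1 (Neg (Conj (chi L B) \<phi>))"
      using eqv False by auto
    have "sat M e (Neg (Conj (chi L B) \<phi>))" by (rule transfer[OF M _ H e(1)]) (simp add: wf wfc)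
    then show ?thesis using e(2) False by simp
  qed
qed

definition asg :: "'a lstruct \<Rightarrow> 'a list \<Rightarrow> nat \<Rightarrow> 'a" where
  "asg M xs i = (if i < length xs then xs ! i else eps M)"

lemma asg_assignment: assumes "is_struct M" "set xs \<subseteq> univ M" shows "assignment M (asg M xs)"
  unfolding assignment_def
proof
  fix i show "asg M xs i \<in> univ M"
  proof (cases "i < length xs")
    case True then have "xs ! i \<in> set xs" by simp
    then show ?thesis using assms(2) True unfolding asg_def by auto
  next
    case False then show ?thesis using assms(1) unfolding asg_def is_struct_def by auto
  qed
qed

lemma asg_snoc: "asg M (xs @ [a]) = (asg M xs)(length xs := a)"
  by (auto simp: asg_def fun_eq_iff nth_append)

definition good :: "nat list set \<Rightarrow> 'a lstruct \<Rightarrow> 'b lstruct \<Rightarrow> 'a list \<Rightarrow> 'b list \<Rightarrow> bool" where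
  "good \<Gamma> M N xs ys \<longleftrightarrow> length xs = length ys \<and> set xs \<subseteq> univ M \<and> set ys \<subseteq> univ N \<and>
     (\<forall>\<phi>. wf_fm \<Gamma> \<phi> \<and> fv \<phi> \<subseteq> {..<length xs} \<longrightarrow> (sat M (asg M xs) \<phi> \<longleftrightarrow> sat N (asg N ys) \<phi>))"

lemma good_sym: "good \<Gamma> M N xs ys \<Longrightarrow> good \<Gamma> N M ys xs"
  unfolding good_def by auto

lemma good_Nil:
  assumes M: "is_model \<Gamma> (Th \<Gamma> A) M" and N: "is_model \<Gamma> (Th \<Gamma> A) N" and A: "assignment A e0"
  shows "good \<Gamma> M N [] []"
  unfolding good_def
proof (intro conjI allI impI)
  fix \<phi> assume a: "wf_fm \<Gamma> \<phi> \<and> fv \<phi> \<subseteq> {..<length ([]::'a list)}"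
  have eM: "assignment M (asg M [])" using M asg_assignment unfolding is_model_def by fastforce
  have eN: "assignment N (asg N [])" using N asg_assignment unfolding is_model_def by fastforce
  have fv0: "fv \<phi> = {}" using a by auto
  show "sat M (asg M []) \<phi> = sat N (asg N []) \<phi>"
  proof (cases "sat A e0 \<phi>")
    case True
    have H: "\<forall>e. assignment A e \<longrightarrow> sat A e \<phi>" using True sat_agree[of \<phi> e0] fv0 by auto
    have "sat M (asg M []) \<phi>" "sat N (asg N []) \<phi>"
      by (rule transfer[OF M _ H eM], use a in simp, rule transfer[OF N _ H eN], use a in simp)
    then show ?thesis by simp
  next
    case False
    have H: "\<forall>e. assignment A e \<longrightarrow> sat A e (Neg \<phi>)" using False sat_agree[of \<phi> e0] fv0 by auto
    have "sat M (asg M []) (Neg \<phi>)" "sat N (asg N []) (Neg \<phi>)"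
      by (rule transfer[OF M _ H eM], use a in simp, rule transfer[OF N _ H eN], use a in simp)
    then show ?thesis by simp
  qed
qed auto

lemma forth:
  assumes tp: "tree_plan \<Gamma> lam"
  and M: "is_model \<Gamma> (Th \<Gamma> (treeplan_struct \<Gamma> lam)) M"
  and N: "is_model \<Gamma> (Th \<Gamma> (treeplan_struct \<Gamma> lam)) N"
  and g: "good \<Gamma> M N xs ys" and a: "a \<in> univ M"
  shows "\<exists>b\<in>univ N. good \<Gamma> M N (xs @ [a]) (ys @ [b])"
proof -
  let ?A = "treeplan_struct \<Gamma> lam"
  define n where "n = length xs"
  define V where "V = {..<Suc n}"
  have finG: "finite \<Gamma>" using tp unfolding tree_plan_def by simp
  have finV: "finite V" unfolding V_def by simp
  obtain L where L: "set L = Atoms \<Gamma> V" using finite_list[OF Atoms_finite[OF finG finV]] by blast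
  define eM where "eM = asg M (xs @ [a])"
  define B where "B = {\<alpha>\<in>Atoms \<Gamma> V. sat M eM \<alpha>}"
  define \<theta> where "\<theta> = chi L B"
  have Ms: "is_struct M" and Ns: "is_struct N" using M N unfolding is_model_def by auto
  have eMa: "assignment M eM" unfolding eM_def using g a Ms by (intro asg_assignment) (auto simp: good_def)
  have sM: "sat M eM \<theta>" unfolding \<theta>_def sat_chi L B_def by blast
  have Lp: "\<forall>\<alpha>\<in>set L. wf_fm \<Gamma> \<alpha> \<and> qfree \<alpha> \<and> fv \<alpha> \<subseteq> V" using L Atoms_props by blast
  have wf\<theta>: "wf_fm \<Gamma> \<theta>" unfolding \<theta>_def using Lp wf_chi by blast
  have fv\<theta>: "fv \<theta> \<subseteq> V" unfolding \<theta>_def fv_chi using Lp by blast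
  have "sat M (asg M xs) (Ex n \<theta>)" using sM a unfolding eM_def asg_snoc n_def by auto
  moreover have "wf_fm \<Gamma> (Ex n \<theta>) \<and> fv (Ex n \<theta>) \<subseteq> {..<length xs}"
    using wf\<theta> fv\<theta> unfolding V_def n_def by auto
  ultimately have "sat N (asg N ys) (Ex n \<theta>)" using g unfolding good_def by blast
  then obtain b where b: "b \<in> univ N" "sat N ((asg N ys)(n := b)) \<theta>" by auto
  have len: "length ys = n" using g unfolding good_def n_def by simp
  define eN where "eN = asg N (ys @ [b])"
  have sN: "sat N eN \<theta>" using b(2) unfolding eN_def asg_snoc len .
  have eNa: "assignment N eN" unfolding eN_def using g b Ns by (intro asg_assignment) (auto simp: good_def)
  obtain e0 where e0: "assignment ?A e0" "sat ?A e0 \<theta>" using realize[OF M wf\<theta> eMa sM] by blast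
  have "good \<Gamma> M N (xs @ [a]) (ys @ [b])"
    unfolding good_def
  proof (intro conjI allI impI)
    show "length (xs @ [a]) = length (ys @ [b])" using len n_def by simp
    show "set (xs @ [a]) \<subseteq> univ M" using g a by (auto simp: good_def)
    show "set (ys @ [b]) \<subseteq> univ N" using g b by (auto simp: good_def)
    fix \<phi> assume \<phi>: "wf_fm \<Gamma> \<phi> \<and> fv \<phi> \<subseteq> {..<length (xs @ [a])}"
    then have fv\<phi>: "fv \<phi> \<subseteq> V" unfolding V_def n_def by auto
    have "sat M eM \<phi> = sat ?A e0 \<phi>"
      using complete_chi[OF tp M finV L _ fv\<phi> e0[unfolded \<theta>_def] eMa sM[unfolded \<theta>_def]] \<phi> by blast
    moreover have "sat N eN \<phi> = sat ?A e0 \<phi>"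
      using complete_chi[OF tp N finV L _ fv\<phi> e0[unfolded \<theta>_def] eNa sN[unfolded \<theta>_def]] \<phi> by blast
    ultimately show "sat M (asg M (xs @ [a])) \<phi> = sat N (asg N (ys @ [b])) \<phi>"
      unfolding eM_def eN_def by simp
  qed
  then show ?thesis using b(1) by blast
qed




primrec bfs :: "nat list set \<Rightarrow> 'a lstruct \<Rightarrow> 'b lstruct \<Rightarrow> nat \<Rightarrow> 'a list \<times> 'b list" where
  "bfs \<Gamma> M N 0 = ([], [])"
| "bfs \<Gamma> M N (Suc k) = (let xs = fst (bfs \<Gamma> M N k); ys = snd (bfs \<Gamma> M N k) in
     if even k then (let a = from_nat_into (univ M) (k div 2) in
        (xs @ [a], ys @ [SOME b. b \<in> univ N \<and> good \<Gamma> M N (xs @ [a]) (ys @ [b])]))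
     else (let b = from_nat_into (univ N) (k div 2) in
        (xs @ [SOME a. a \<in> univ M \<and> good \<Gamma> M N (xs @ [a]) (ys @ [b])], ys @ [b])))"

lemma bfs_snoc: "\<exists>a b. bfs \<Gamma> M N (Suc k) = (fst (bfs \<Gamma> M N k) @ [a], snd (bfs \<Gamma> M N k) @ [b])"
  by (simp add: Let_def)

lemma bfs_len: "length (fst (bfs \<Gamma> M N k)) = k \<and> length (snd (bfs \<Gamma> M N k)) = k"
proof (induction k)
  case (Suc k)
  obtain a b where "bfs \<Gamma> M N (Suc k) = (fst (bfs \<Gamma> M N k) @ [a], snd (bfs \<Gamma> M N k) @ [b])"
    using bfs_snoc[of \<Gamma> M N k] by blast
  then show ?case using Suc by simp
qed simp

lemma bfs_good:
  assumes tp: "tree_plan \<Gamma> lam"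
  and M: "is_model \<Gamma> (Th \<Gamma> (treeplan_struct \<Gamma> lam)) M"
  and N: "is_model \<Gamma> (Th \<Gamma> (treeplan_struct \<Gamma> lam)) N"
  shows "good \<Gamma> M N (fst (bfs \<Gamma> M N k)) (snd (bfs \<Gamma> M N k))"
proof (induction k)
  case 0
  have "assignment (treeplan_struct \<Gamma> lam) (\<lambda>_. [])"
    using dom_Nil[OF tp] by (simp add: assignment_def treeplan_struct_def)
  then show ?case using good_Nil[OF M N] by simp
next
  case (Suc k)
  define xs where "xs = fst (bfs \<Gamma> M N k)"
  define ys where "ys = snd (bfs \<Gamma> M N k)"
  have g: "good \<Gamma> M N xs ys" using Suc xs_def ys_def by simp
  have neM: "univ M \<noteq> {}" and neN: "univ N \<noteq> {}" using M N unfolding is_model_def is_struct_def by auto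
  show ?case
  proof (cases "even k")
    case True
    define a where "a = from_nat_into (univ M) (k div 2)"
    have a: "a \<in> univ M" unfolding a_def using neM by (rule from_nat_into)
    have "\<exists>b. b \<in> univ N \<and> good \<Gamma> M N (xs @ [a]) (ys @ [b])" using forth[OF tp M N g a] by blast
    from someI_ex[OF this] show ?thesis using True
      by (simp add: Let_def xs_def[symmetric] ys_def[symmetric] a_def[symmetric])
  next
    case False
    define b where "b = from_nat_into (univ N) (k div 2)"
    have b: "b \<in> univ N" unfolding b_def using neN by (rule from_nat_into)
    have "\<exists>a. a \<in> univ M \<and> good \<Gamma> N M (ys @ [b]) (xs @ [a])" using forth[OF tp N M good_sym[OF g] b] by blast
    then have "\<exists>a. a \<in> univ M \<and> good \<Gamma> M N (xs @ [a]) (ys @ [b])" using good_sym by blast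
    from someI_ex[OF this] show ?thesis using False
      by (simp add: Let_def xs_def[symmetric] ys_def[symmetric] b_def[symmetric])
  qed
qed

lemma iso_exists:
  assumes tp: "tree_plan \<Gamma> lam"
  and M: "is_model \<Gamma> (Th \<Gamma> (treeplan_struct \<Gamma> lam)) M"
  and N: "is_model \<Gamma> (Th \<Gamma> (treeplan_struct \<Gamma> lam)) N"
  and cM: "countable (univ M)" and cN: "countable (univ N)"
  shows "\<exists>f. L_iso \<Gamma> M N f"
proof -
  define X where "X i = fst (bfs \<Gamma> M N (Suc i)) ! i" for i
  define Y where "Y i = snd (bfs \<Gamma> M N (Suc i)) ! i" for i
  have fstX: "fst (bfs \<Gamma> M N k) = map X [0..<k] \<and> snd (bfs \<Gamma> M N k) = map Y [0..<k]" for k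
  proof (induction k)
    case (Suc k)
    obtain a b where ab: "bfs \<Gamma> M N (Suc k) = (fst (bfs \<Gamma> M N k) @ [a], snd (bfs \<Gamma> M N k) @ [b])"
      using bfs_snoc[of \<Gamma> M N k] by blast
    have "X k = a" "Y k = b" unfolding X_def Y_def using ab bfs_len[of \<Gamma> M N k] by (simp_all add: nth_append)
    then show ?case using Suc ab by simp
  qed simp
  have gk: "good \<Gamma> M N (map X [0..<k]) (map Y [0..<k])" for k
    using bfs_good[OF tp M N, of k] fstX[of k] by simp
  have XM: "X i \<in> univ M" and YN: "Y i \<in> univ N" for i
    using gk[of "Suc i"] unfolding good_def by auto
  have elem: "sat M X \<phi> = sat N Y \<phi>" if wf: "wf_fm \<Gamma> \<phi>" for \<phi>
  proof -
    obtain k where k: "fv \<phi> \<subseteq> {..<k}" using finite_nat_bounded[OF finite_fv] by blast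
    have "sat M (asg M (map X [0..<k])) \<phi> = sat N (asg N (map Y [0..<k])) \<phi>"
      using gk[of k] wf k unfolding good_def by simp
    moreover have "sat M (asg M (map X [0..<k])) \<phi> = sat M X \<phi>"
      using k by (intro sat_agree) (auto simp: asg_def)
    moreover have "sat N (asg N (map Y [0..<k])) \<phi> = sat N Y \<phi>"
      using k by (intro sat_agree) (auto simp: asg_def)
    ultimately show ?thesis by simp
  qed
  have neM: "univ M \<noteq> {}" and neN: "univ N \<noteq> {}" using M N unfolding is_model_def is_struct_def by auto
  have X2: "X (2*j) = from_nat_into (univ M) j" for j
    unfolding X_def using bfs_len[of \<Gamma> M N "2*j"] by (simp add: Let_def nth_append)
  have Y2: "Y (Suc (2*j)) = from_nat_into (univ N) j" for j
    unfolding Y_def using bfs_len[of \<Gamma> M N "Suc (2*j)"] by (simp add: Let_def nth_append)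
  have surjX: "\<exists>i. X i = x" if "x \<in> univ M" for x
    using from_nat_into_surj[OF cM that] X2 by metis
  have surjY: "\<exists>i. Y i = y" if "y \<in> univ N" for y
    using from_nat_into_surj[OF cN that] Y2 by metis
  have eqXY: "X i = X j \<longleftrightarrow> Y i = Y j" for i j
    using elem[of "Eq (Var i) (Var j)"] by simp
  define f where "f x = Y (SOME i. X i = x)" for x
  have fX: "f (X i) = Y i" for i
  proof -
    have "X (SOME i'. X i' = X i) = X i" by (rule someI_ex) blast
    then show ?thesis unfolding f_def using eqXY by blast
  qed
  have "L_iso \<Gamma> M N f"
    unfolding L_iso_def
  proof (intro conjI ballI)
    show "bij_betw f (univ M) (univ N)"
      unfolding bij_betw_def
    proof
      show "inj_on f (univ M)"
      proof (rule inj_onI)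
        fix x y assume "x \<in> univ M" "y \<in> univ M" "f x = f y"
        then show "x = y" using surjX fX eqXY by metis
      qed
      show "f ` univ M = univ N"
      proof
        show "f ` univ M \<subseteq> univ N"
        proof
          fix y assume "y \<in> f ` univ M"
          then obtain x where x: "x \<in> univ M" "y = f x" by blast
          then obtain i where "X i = x" using surjX by blast
          then show "y \<in> univ N" using x fX YN by metis
        qed
        show "univ N \<subseteq> f ` univ M"
        proof
          fix y assume "y \<in> univ N"
          then obtain j where "Y j = y" using surjY by blast
          then show "y \<in> f ` univ M" using fX XM by (metis image_eqI)
        qed
      qed
    qed
    have epsM: "eps M \<in> univ M" using M unfolding is_model_def is_struct_def by auto
    then obtain i where i: "X i = eps M" using surjX by blast
    then have "Y i = eps N" using elem[of "Eq (Var i) Eps"] by simp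
    then show "f (eps M) = eps N" using i fX by metis
  next
    fix x y assume x: "x \<in> univ M" and y: "y \<in> univ M"
    obtain i j where ij: "X i = x" "X j = y" using surjX x y by metis
    have "meet M x y \<in> univ M" using M x y unfolding is_model_def is_struct_def by auto
    then obtain k where k: "X k = meet M x y" using surjX by blast
    have "meet N (Y i) (Y j) = Y k" using elem[of "Eq (Meet (Var i) (Var j)) (Var k)"] ij k by simp
    then show "f (meet M x y) = meet N (f x) (f y)" using ij k fX by metis
  next
    fix x assume x: "x \<in> univ M"
    obtain i where i: "X i = x" using surjX x by metis
    have "prd M x \<in> univ M" using M x unfolding is_model_def is_struct_def by auto
    then obtain k where k: "X k = prd M x" using surjX by blast
    have "prd N (Y i) = Y k" using elem[of "Eq (Pred (Var i)) (Var k)"] i k by simp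
    then show "f (prd M x) = prd N (f x)" using i k fX by metis
  next
    fix x y assume x: "x \<in> univ M" and y: "y \<in> univ M"
    obtain i j where ij: "X i = x" "X j = y" using surjX x y by metis
    have "f x = Y i" "f y = Y j" using fX ij by metis+
    then show "leq M x y = leq N (f x) (f y)" using elem[of "Le (Var i) (Var j)"] ij by simp
  next
    fix \<sigma> x assume \<sigma>: "\<sigma> \<in> \<Gamma>" and x: "x \<in> univ M"
    obtain i where i: "X i = x" using surjX x by metis
    have "f x = Y i" using fX i by metis
    then show "pr M \<sigma> x = pr N \<sigma> (f x)" using elem[of "P \<sigma> (Var i)"] \<sigma> i by simp
  qed
  then show ?thesis by blast
qed

theorem mainTheorem4:
  fixes \<Gamma> :: "nat list set" and lam :: "nat list \<Rightarrow> lab"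
  assumes "tree_plan \<Gamma> lam"
  shows "aleph0_categorical \<Gamma> (Th \<Gamma> (treeplan_struct \<Gamma> lam)) TYPE('a) TYPE('b)
         \<and> has_QE_Th \<Gamma> (treeplan_struct \<Gamma> lam)"
proof
  show "aleph0_categorical \<Gamma> (Th \<Gamma> (treeplan_struct \<Gamma> lam)) TYPE('a) TYPE('b)"
    unfolding aleph0_categorical_def
  proof (intro allI impI)
    fix M :: "'a lstruct" and N :: "'b lstruct"
    assume H: "is_model \<Gamma> (Th \<Gamma> (treeplan_struct \<Gamma> lam)) M \<and> countable (univ M) \<and> infinite (univ M) \<and>
        is_model \<Gamma> (Th \<Gamma> (treeplan_struct \<Gamma> lam)) N \<and> countable (univ N) \<and> infinite (univ N)"
    then show "\<exists>f. L_iso \<Gamma> M N f" using iso_exists[OF assms] by blast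
  qed
  show "has_QE_Th \<Gamma> (treeplan_struct \<Gamma> lam)" by (rule QE[OF assms])
qed


end
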